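(* Let $L\ge2$, $\rho>0$, and let $(\alpha_k)_{k\ge0}$ be nonnegative reals, not all zero, with $\bar\alpha:=\sum_{k\ge1}k\alpha_k\in(0,\infty)$, satisfying the fixed point equations $\alpha_{k+1}u_{k+1}=\rho\,\bar\alpha^{L-1}\alpha_k$ for all $k\ge0$, where $$u_k=k\sum_{k_2,\dots,k_L=1}^{\infty}\Big(\tfrac1k\wedge\tfrac1{k_2}\wedge\cdots\wedge\tfrac1{k_L}\Big)\prod_{i=2}^{L}k_i\alpha_{k_i},\quad k\ge1.$$ Then all $\alpha_k>0$, $\alpha_{k+1}/\alpha_k=\rho\bar\alpha^{L-1}/u_{k+1}$, and the sequence $(\alpha_k)$ is unimodal: it is increasing in $k$ as long as $u_{k+1}<\rho\bar\alpha^{L-1}$ and nonincreasing afterwards, so that its maximum is attained at $k_0=\max\{k>0:\ u_k<\rho\bar\alpha^{L-1}\}$ (with $k_0$ taken as $0$ if this set is empty).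
   Context: $a\wedge b$ denotes $\min(a,b)$. These are the mean-field fixed point equations for the stationary distribution $\alpha_k$ of the number of transfers on a link in a large symmetrical best-effort network with routes of length $L$ and link load $\rho$ under the min policy. *)

theory Defs
  imports "HOL-Analysis.Analysis"
begin

text \<open>Index tuples (k_2,...,k_L) with all entries >= 1, represented as functions
  nat => nat that are >= 1 on {2..L} and 0 elsewhere (canonical representation).\<close>
definition idx_tuples :: "nat \<Rightarrow> (nat \<Rightarrow> nat) set" where
  "idx_tuples L = {ks. (\<forall>i\<in>{2..L}. 1 \<le> ks i) \<and> (\<forall>i. i \<notin> {2..L} \<longrightarrow> ks i = 0)}"

definition u_fun :: "nat \<Rightarrow> (nat \<Rightarrow> real) \<Rightarrow> nat \<Rightarrow> real" where
  "u_fun L \<alpha> k = real k *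
     (\<Sum>\<^sub>\<infinity> ks \<in> idx_tuples L.
        Min (insert (1 / real k) ((\<lambda>i. 1 / real (ks i)) ` {2..L})) *
        (\<Prod>i\<in>{2..L}. real (ks i) * \<alpha> (ks i)))"

end

theory Submission
  imports Defs
begin

lemma cmp_summable:
  fixes f g :: "'a \<Rightarrow> real"
  assumes "g summable_on A" "\<And>x. x\<in>A \<Longrightarrow> 0 \<le> f x \<and> f x \<le> g x"
  shows "f summable_on A"
proof -
  have "(\<lambda>x. norm (g x)) summable_on A"
    using assms(1) by (rule summable_on_cong[THEN iffD1, rotated]) (use assms(2) in force)
  then have "(\<lambda>x. norm (f x)) summable_on A"
    apply (rule Infinite_Sum.abs_summable_on_comparison_test)
    subgoal for x using assms(2)[of x] by auto
    done
  then show ?thesis by (rule abs_summable_summable)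
qed

lemma up_chain:
  fixes a :: "nat \<Rightarrow> real"
  assumes "\<And>k. k < n \<Longrightarrow> a k \<le> a (k+1)" "k \<le> n"
  shows "a k \<le> a n"
  using assms
proof (induction n)
  case 0 then show ?case by simp
next
  case (Suc n)
  show ?case
  proof (cases "k = Suc n")
    case False
    then have "a k \<le> a n" using Suc by auto
    also have "a n \<le> a (Suc n)" using Suc.prems(1)[of n] by simp
    finally show ?thesis .
  qed simp
qed

lemma down_chain:
  fixes a :: "nat \<Rightarrow> real"
  assumes "\<And>k. k \<ge> m \<Longrightarrow> a (k+1) \<le> a k" "m \<le> k"
  shows "a k \<le> a m"
  using assms(2)
proof (induction k rule: dec_induct)
  case base then show ?case by simp
next
  case (step n)
  then show ?case using assms(1)[of n] by simp
qed
theorem mainTheorem5: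
  fixes L :: nat and \<rho> :: real and \<alpha> :: "nat \<Rightarrow> real" and abar :: real
  assumes L: "L \<ge> 2"
    and rho: "\<rho> > 0"
    and nonneg: "\<And>k. \<alpha> k \<ge> 0"
    and nonzero: "\<exists>k. \<alpha> k \<noteq> 0"
    and summ: "summable (\<lambda>k. real k * \<alpha> k)"
    and abar_def: "abar = (\<Sum>k. real k * \<alpha> k)"
    and abar_pos: "abar > 0"
    and fp: "\<And>k. \<alpha> (k + 1) * u_fun L \<alpha> (k + 1) = \<rho> * abar ^ (L - 1) * \<alpha> k"
  shows "(\<forall>k. \<alpha> k > 0)
    \<and> (\<forall>k. \<alpha> (k + 1) / \<alpha> k = \<rho> * abar ^ (L - 1) / u_fun L \<alpha> (k + 1))
    \<and> (\<forall>k. u_fun L \<alpha> (k + 1) < \<rho> * abar ^ (L - 1) \<longrightarrow> \<alpha> k < \<alpha> (k + 1))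
    \<and> (\<forall>k. u_fun L \<alpha> (k + 1) \<ge> \<rho> * abar ^ (L - 1) \<longrightarrow>
          (\<forall>j\<ge>k. \<alpha> (j + 1) \<le> \<alpha> j))
    \<and> (let S = {k. 0 < k \<and> u_fun L \<alpha> k < \<rho> * abar ^ (L - 1)};
           k0 = (if S = {} then 0 else Max S)
       in finite S \<and> (\<forall>k<k0. \<alpha> k < \<alpha> (k + 1)) \<and> (\<forall>k\<ge>k0. \<alpha> (k + 1) \<le> \<alpha> k)
          \<and> (\<forall>k. \<alpha> k \<le> \<alpha> k0))"
proof -
  define c where "c = \<rho> * abar ^ (L - 1)"
  have cpos: "c > 0" unfolding c_def using rho abar_pos by simp
  define I where "I = idx_tuples L"
  define P where "P = (\<lambda>ks::nat\<Rightarrow>nat. \<Prod>i\<in>{2..L}. real (ks i) * \<alpha> (ks i))"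
  define G where "G = (\<lambda>ks::nat\<Rightarrow>nat. (\<lambda>i. 1 / real (ks i)) ` {2..L})"
  define T where "T = (\<lambda>k::nat. \<lambda>ks. Min (insert (1 / real k) (G ks)) * P ks)"
  define m where "m = (\<lambda>ks. Min (G ks))"
  have u_eq: "u_fun L \<alpha> k = real k * infsum (T k) I" for k
    unfolding u_fun_def T_def G_def P_def I_def by simp
  have Pnn: "P ks \<ge> 0" for ks
    unfolding P_def using nonneg by (auto intro!: prod_nonneg)
  have Gfin: "finite (G ks)" "G ks \<noteq> {}" for ks
    unfolding G_def using L by auto
  have mpos: "m ks > 0" if "ks \<in> I" for ks
  proof -
    have "\<forall>x\<in>G ks. x > 0" using that unfolding G_def I_def idx_tuples_def
      by (force intro!: divide_pos_pos)
    then show ?thesis unfolding m_def using Gfin[of ks] by (simp add: Min_gr_iff)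
  qed
  have Tform: "T k ks = min (1 / real k) (m ks) * P ks" for k ks
    unfolding T_def m_def using Gfin[of ks] by (simp add: Min_insert)
  have kT: "real k * T k ks = min 1 (real k * m ks) * P ks" if "k \<ge> 1" for k ks
  proof -
    have "real k * min (1 / real k) (m ks) = min 1 (real k * m ks)"
      using that by (auto simp: min_def field_simps)
    then show ?thesis unfolding Tform by (metis mult.assoc)
  qed
  have Tnn: "T k ks \<ge> 0" if "ks \<in> I" for k ks
    unfolding Tform using mpos[OF that] Pnn[of ks] by simp
  have Tle1: "T k ks \<le> T 1 ks" if "k \<ge> 1" "ks \<in> I" for k ks
  proof -
    have "1 / real k \<le> 1 / real (1::nat)" using that by (simp add: field_simps)
    then have "min (1 / real k) (m ks) \<le> min (1 / real (1::nat)) (m ks)"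
      by (rule min.mono) simp
    then show ?thesis unfolding Tform using Pnn[of ks] by (intro mult_right_mono) auto
  qed
  have T1le: "T 1 ks \<le> real k * T k ks" if "k \<ge> 1" "ks \<in> I" for k ks
  proof -
    have "T 1 ks = min 1 (real (1::nat) * m ks) * P ks" using kT[of 1 ks] by simp
    also have "\<dots> \<le> min 1 (real k * m ks) * P ks"
    proof -
      have "1 * m ks \<le> real k * m ks"
        using that mpos[OF that(2)] by (intro mult_right_mono) auto
      then have "min 1 (real (1::nat) * m ks) \<le> min 1 (real k * m ks)"
        by (intro min.mono) auto
      then show ?thesis using Pnn[of ks] by (rule mult_right_mono)
    qed
    finally show ?thesis using kT[OF that(1)] by simp
  qed
  have sum1: "T 1 summable_on I"
  proof (rule ccontr)
    assume ns: "\<not> T 1 summable_on I"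
    have "\<alpha> k = 0" for k
    proof -
      have "\<not> T (k+1) summable_on I"
      proof
        assume "T (k+1) summable_on I"
        then have "(\<lambda>ks. real (k+1) * T (k+1) ks) summable_on I"
          by (rule summable_on_cmult_right)
        then have "T 1 summable_on I"
          by (rule cmp_summable) (use Tnn T1le[of "k+1"] in auto)
        with ns show False by simp
      qed
      then have "u_fun L \<alpha> (k+1) = 0" unfolding u_eq by (simp add: infsum_not_exists)
      with fp[of k] have "c * \<alpha> k = 0" unfolding c_def by simp
      with cpos show ?thesis by simp
    qed
    with nonzero show False by simp
  qed
  have sumk: "T k summable_on I" if "k \<ge> 1" for k
    using sum1 by (rule cmp_summable) (use Tnn Tle1 that in auto)
  have u_mono: "u_fun L \<alpha> k \<le> u_fun L \<alpha> k'" if "1 \<le> k" "k \<le> k'" for k k'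
  proof -
    have "u_fun L \<alpha> k = infsum (\<lambda>ks. real k * T k ks) I"
      unfolding u_eq by (simp add: infsum_cmult_right')
    also have "\<dots> \<le> infsum (\<lambda>ks. real k' * T k' ks) I"
    proof (rule infsum_mono)
      show "(\<lambda>ks. real k * T k ks) summable_on I"
        using sumk[OF that(1)] by (rule summable_on_cmult_right)
      show "(\<lambda>ks. real k' * T k' ks) summable_on I"
        using sumk[of k'] that by (intro summable_on_cmult_right) auto
      fix ks assume ks: "ks \<in> I"
      have "min 1 (real k * m ks) * P ks \<le> min 1 (real k' * m ks) * P ks"
        using that mpos[OF ks] Pnn[of ks]
        by (intro mult_right_mono min.mono) auto
      then show "real k * T k ks \<le> real k' * T k' ks"
        using kT[OF that(1)] kT[of k'] that by simp
    qed
    also have "\<dots> = u_fun L \<alpha> k'"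
      unfolding u_eq by (simp add: infsum_cmult_right')
    finally show ?thesis .
  qed
  obtain n where n: "n \<ge> 1" "\<alpha> n > 0"
  proof (rule ccontr)
    assume "\<not> thesis"
    then have "\<forall>n\<ge>1. \<alpha> n \<le> 0" using that by force
    then have "\<forall>n. real n * \<alpha> n = 0" using nonneg
      by (metis antisym le_add1 mult_eq_0_iff of_nat_0 plus_1_eq_Suc not0_implies_Suc)
    then have "(\<lambda>k. real k * \<alpha> k) = (\<lambda>_. 0)" by auto
    then have "abar = 0" unfolding abar_def by simp
    with abar_pos show False by simp
  qed
  define ks0 where "ks0 = (\<lambda>i::nat. if i \<in> {2..L} then n else 0)"
  have ks0I: "ks0 \<in> I" unfolding ks0_def I_def idx_tuples_def using n by auto
  have upos: "u_fun L \<alpha> k > 0" if "k \<ge> 1" for k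
  proof -
    have "P ks0 > 0" unfolding P_def ks0_def using n by (auto intro!: prod_pos)
    then have t0: "T k ks0 > 0" unfolding Tform using mpos[OF ks0I] that by simp
    have "T k ks0 = infsum (T k) {ks0}" by simp
    also have "\<dots> \<le> infsum (T k) I"
      by (rule infsum_mono2) (use sumk[OF that] ks0I Tnn in auto)
    finally show ?thesis unfolding u_eq using t0 that by simp
  qed
  have fp': "\<alpha> (k+1) * u_fun L \<alpha> (k+1) = c * \<alpha> k" for k
    unfolding c_def by (rule fp)
  have zero_iff: "\<alpha> k = 0 \<longleftrightarrow> \<alpha> 0 = 0" for k
  proof (induction k)
    case (Suc k)
    have "\<alpha> (Suc k) = 0 \<longleftrightarrow> \<alpha> k = 0"
      using fp'[of k] upos[of "k+1"] cpos by auto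
    then show ?case using Suc by simp
  qed simp
  have apos: "\<alpha> k > 0" for k
  proof -
    obtain j where "\<alpha> j \<noteq> 0" using nonzero by blast
    then have "\<alpha> 0 \<noteq> 0" using zero_iff by blast
    then have "\<alpha> k \<noteq> 0" using zero_iff by blast
    then show ?thesis using nonneg[of k] by simp
  qed
  have ratio: "\<alpha> (k + 1) / \<alpha> k = c / u_fun L \<alpha> (k + 1)" for k
    using fp'[of k] apos[of k] upos[of "k+1"] by (auto simp: field_simps)
  have inc: "\<alpha> k < \<alpha> (k + 1)" if "u_fun L \<alpha> (k + 1) < c" for k
  proof -
    have "\<alpha> (k+1) = c * \<alpha> k / u_fun L \<alpha> (k + 1)"
      using fp'[of k] upos[of "k+1"] by (auto simp: field_simps)
    also have "\<dots> > \<alpha> k" using that apos[of k] upos[of "k+1"]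
      by (simp add: field_simps)
    finally show ?thesis .
  qed
  have dec1: "\<alpha> (k + 1) \<le> \<alpha> k" if "u_fun L \<alpha> (k + 1) \<ge> c" for k
  proof -
    have "\<alpha> (k+1) = c * \<alpha> k / u_fun L \<alpha> (k + 1)"
      using fp'[of k] upos[of "k+1"] by (auto simp: field_simps)
    also have "\<dots> \<le> \<alpha> k" using that apos[of k] upos[of "k+1"]
      by (simp add: field_simps)
    finally show ?thesis .
  qed
  have dec: "\<forall>j\<ge>k. \<alpha> (j + 1) \<le> \<alpha> j" if "u_fun L \<alpha> (k + 1) \<ge> c" for k
  proof (intro allI impI)
    fix j assume "j \<ge> k"
    then have "u_fun L \<alpha> (k + 1) \<le> u_fun L \<alpha> (j + 1)" by (intro u_mono) auto
    with that show "\<alpha> (j + 1) \<le> \<alpha> j" by (intro dec1) simp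
  qed
  define S where "S = {k. 0 < k \<and> u_fun L \<alpha> k < c}"
  have finS: "finite S"
  proof (rule ccontr)
    assume "infinite S"
    have allS: "u_fun L \<alpha> k < c" if "k \<ge> 1" for k
    proof -
      obtain s where "s \<in> S" "s \<ge> k"
        using \<open>infinite S\<close> by (meson infinite_nat_iff_unbounded_le)
      then show ?thesis using u_mono[OF that \<open>s \<ge> k\<close>] unfolding S_def by auto
    qed
    have "\<alpha> 0 \<le> \<alpha> k" for k
      by (rule up_chain) (use inc allS in \<open>auto intro: less_imp_le\<close>)
    then have ge: "\<alpha> 0 \<le> real k * \<alpha> k" if "k \<ge> 1" for k
    proof -
      have "1 * \<alpha> k \<le> real k * \<alpha> k" using that nonneg[of k] by (intro mult_right_mono) auto
      then show ?thesis using \<open>\<alpha> 0 \<le> \<alpha> k\<close> by simp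
    qed
    have "(\<lambda>k. real k * \<alpha> k) \<longlonglongrightarrow> 0" using summ by (rule summable_LIMSEQ_zero)
    then have "eventually (\<lambda>k. real k * \<alpha> k < \<alpha> 0) sequentially"
      using apos[of 0] by (rule order_tendstoD)
    then obtain N where "\<And>k. k \<ge> N \<Longrightarrow> real k * \<alpha> k < \<alpha> 0"
      unfolding eventually_sequentially by blast
    from this[of "N+1"] ge[of "N+1"] show False by simp
  qed
  have last: "let S = {k. 0 < k \<and> u_fun L \<alpha> k < c};
           k0 = (if S = {} then 0 else Max S)
       in finite S \<and> (\<forall>k<k0. \<alpha> k < \<alpha> (k + 1)) \<and> (\<forall>k\<ge>k0. \<alpha> (k + 1) \<le> \<alpha> k)
          \<and> (\<forall>k. \<alpha> k \<le> \<alpha> k0)"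
  proof -
    define k0 where "k0 = (if S = {} then 0 else Max S)"
    have A: "\<forall>k<k0. \<alpha> k < \<alpha> (k + 1)"
    proof (intro allI impI)
      fix k assume "k < k0"
      then have "S \<noteq> {}" "k0 = Max S" unfolding k0_def by (auto split: if_splits)
      then have "k0 \<in> S" using finS by simp
      then have "u_fun L \<alpha> k0 < c" unfolding S_def by simp
      moreover have "u_fun L \<alpha> (k+1) \<le> u_fun L \<alpha> k0" using \<open>k < k0\<close> by (intro u_mono) auto
      ultimately show "\<alpha> k < \<alpha> (k + 1)" by (intro inc) simp
    qed
    have B: "\<forall>k\<ge>k0. \<alpha> (k + 1) \<le> \<alpha> k"
    proof (intro allI impI)
      fix k assume "k0 \<le> k"
      have "k + 1 \<notin> S"
      proof
        assume "k + 1 \<in> S"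
        then have "S \<noteq> {}" "k + 1 \<le> Max S" using finS by auto
        then show False using \<open>k0 \<le> k\<close> unfolding k0_def by simp
      qed
      then show "\<alpha> (k + 1) \<le> \<alpha> k" unfolding S_def by (intro dec1) simp
    qed
    have C: "\<alpha> k \<le> \<alpha> k0" for k
    proof (cases "k \<le> k0")
      case True
      then show ?thesis by (rule up_chain[rotated]) (use A in \<open>auto intro: less_imp_le\<close>)
    next
      case False
      then show ?thesis by (intro down_chain[of k0]) (use B in auto)
    qed
    show ?thesis unfolding Let_def S_def[symmetric] k0_def[symmetric] using finS A B C by simp
  qed
  show ?thesis unfolding c_def[symmetric]
    using apos ratio inc dec last by simp
qed

end
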